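(* Let $\mathbb{k}$ be a field, and let $\mathbb{k}^{2n} = \mathbb{k}^n_x \times \mathbb{k}^n_\xi$ have coordinates $(x,\xi) = (x_1,\dots,x_n,\xi_1,\dots,\xi_n)$. Let $X \subseteq \mathbb{k}^n_\xi$ be a subvariety. If $L$ is an $\ell \times n$ matrix with entries in $\mathbb{k}$, then the variety $\mathcal{V}(Lx\xi)$ of the bilinear forms $Lx\xi$ in $\mathbb{k}^{2n}$ is transverse to $\mathbb{k}^n \times X$ at any smooth point of $\mathbb{k}^n \times X$ whose $\xi$-coordinates are all nonzero.
   Context: Here $x\xi$ denotes the column vector $(x_1\xi_1,\dots,x_n\xi_n)^T$, and $Lx\xi$ is the vector of $\ell$ bilinear forms obtained by multiplying $L$ times $x\xi$; $\mathcal{V}(Lx\xi)\subseteq \mathbb{k}^{2n}$ is their common zero locus. Varieties are considered over the algebraic closure of $\mathbb{k}$ when needed. Two subvarieties $V,W$ of an ambient affine space are transverse at a point $p \in V\cap W$ if the (Zariski) tangent spaces $T_pV$ and $T_pW$ sum to the whole tangent space of the ambient space; the claim concerns points $p$ of $\mathbb{k}^n\times X$ (with all $\xi$-coordinates nonzero, smooth on $\mathbb{k}^n\times X$) lying in $\mathcal{V}(Lx\xi)$. *)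

theory Defs
  imports "HOL-Library.Poly_Mapping" "HOL-Computational_Algebra.Polynomial"
begin

text \<open>Multivariate polynomials over a field 'a in variables indexed by 'v:
  finitely supported maps from exponent vectors (monomials) to coefficients.\<close>

type_synonym ('v, 'a) mpoly = "('v \<Rightarrow>\<^sub>0 nat) \<Rightarrow>\<^sub>0 'a"

definition mpoly_eval :: "('v, 'a::comm_ring_1) mpoly \<Rightarrow> ('v \<Rightarrow> 'a) \<Rightarrow> 'a" where
  "mpoly_eval f p =
     (\<Sum>m\<in>Poly_Mapping.keys f. Poly_Mapping.lookup f m * (\<Prod>i\<in>Poly_Mapping.keys m. p i ^ Poly_Mapping.lookup m i))"

definition mpoly_diff :: "('v, 'a::comm_ring_1) mpoly \<Rightarrow> ('v \<Rightarrow> 'a) \<Rightarrow> ('v \<Rightarrow> 'a) \<Rightarrow> 'a" where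
  "mpoly_diff f p v =
     (\<Sum>m\<in>Poly_Mapping.keys f. Poly_Mapping.lookup f m *
        (\<Sum>i\<in>Poly_Mapping.keys m. of_nat (Poly_Mapping.lookup m i) * p i ^ (Poly_Mapping.lookup m i - 1)
            * (\<Prod>j\<in>Poly_Mapping.keys m - {i}. p j ^ Poly_Mapping.lookup m j) * v i))"

definition zero_set :: "('v, 'a::comm_ring_1) mpoly set \<Rightarrow> ('v \<Rightarrow> 'a) set" where
  "zero_set F = {p. \<forall>f\<in>F. mpoly_eval f p = 0}"

definition zariski_closed :: "('v \<Rightarrow> 'a::comm_ring_1) set \<Rightarrow> bool" where
  "zariski_closed V \<longleftrightarrow> (\<exists>F. V = zero_set F)"

definition vanishing_ideal :: "('v \<Rightarrow> 'a::comm_ring_1) set \<Rightarrow> ('v, 'a) mpoly set" where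
  "vanishing_ideal V = {f. \<forall>p\<in>V. mpoly_eval f p = 0}"

definition tangent_space :: "('v \<Rightarrow> 'a::comm_ring_1) set \<Rightarrow> ('v \<Rightarrow> 'a) \<Rightarrow> ('v \<Rightarrow> 'a) set" where
  "tangent_space V p = {v. \<forall>f\<in>vanishing_ideal V. mpoly_diff f p v = 0}"

definition transverse_at :: "('v \<Rightarrow> 'a::comm_ring_1) set \<Rightarrow> ('v \<Rightarrow> 'a) set \<Rightarrow> ('v \<Rightarrow> 'a) \<Rightarrow> bool" where
  "transverse_at V W p \<longleftrightarrow> p \<in> V \<and> p \<in> W \<and>
     (\<forall>w. \<exists>a\<in>tangent_space V p. \<exists>b\<in>tangent_space W p. w = (\<lambda>i. a i + b i))"

definition irreducible_closed :: "('v \<Rightarrow> 'a::comm_ring_1) set \<Rightarrow> bool" where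
  "irreducible_closed Z \<longleftrightarrow> zariski_closed Z \<and> Z \<noteq> {} \<and>
     (\<forall>A B. zariski_closed A \<longrightarrow> zariski_closed B \<longrightarrow> Z \<subseteq> A \<union> B \<longrightarrow> Z \<subseteq> A \<or> Z \<subseteq> B)"

text \<open>Local dimension of V at p: the supremum of lengths n of chains
  Z_0 < Z_1 < ... < Z_n of irreducible closed subsets of V with p in Z_0
  (= the maximal dimension of an irreducible component of V through p).\<close>
definition local_dim :: "('v \<Rightarrow> 'a::comm_ring_1) set \<Rightarrow> ('v \<Rightarrow> 'a) \<Rightarrow> nat" where
  "local_dim V p = Sup {n. \<exists>Z::nat \<Rightarrow> ('v \<Rightarrow> 'a) set.
      (\<forall>i\<le>n. irreducible_closed (Z i) \<and> Z i \<subseteq> V) \<and>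
      (\<forall>i<n. Z i \<subset> Z (Suc i)) \<and> p \<in> Z 0}"

definition lin_indep :: "('v \<Rightarrow> 'a::field) set \<Rightarrow> bool" where
  "lin_indep B \<longleftrightarrow> (\<forall>c. (\<lambda>i. \<Sum>b\<in>B. c b * b i) = (\<lambda>i. 0) \<longrightarrow> (\<forall>b\<in>B. c b = 0))"

definition lin_span :: "('v \<Rightarrow> 'a::field) set \<Rightarrow> ('v \<Rightarrow> 'a) set" where
  "lin_span B = {w. \<exists>c. w = (\<lambda>i. \<Sum>b\<in>B. c b * b i)}"

definition smooth_point :: "('v \<Rightarrow> 'a::field) set \<Rightarrow> ('v \<Rightarrow> 'a) \<Rightarrow> bool" where
  "smooth_point V p \<longleftrightarrow> p \<in> V \<and>
     (\<exists>B. finite B \<and> B \<subseteq> tangent_space V p \<and> lin_indep B \<and>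
          tangent_space V p \<subseteq> lin_span B \<and> card B = local_dim V p)"

definition alg_closed :: "'a::field itself \<Rightarrow> bool" where
  "alg_closed _ \<longleftrightarrow> (\<forall>q::'a poly. degree q > 0 \<longrightarrow> (\<exists>x. poly q x = 0))"

text \<open>Coordinates on k^{2n}: Inl i is x_i, Inr i is xi_i.
  The bilinear form (L x xi)_r = sum_i L r i * x_i * xi_i.\<close>
definition bilin_form :: "(nat \<Rightarrow> 'n::finite \<Rightarrow> 'a::comm_ring_1) \<Rightarrow> nat \<Rightarrow> ('n + 'n, 'a) mpoly" where
  "bilin_form L r = (\<Sum>i\<in>UNIV.
      Poly_Mapping.single (Poly_Mapping.single (Inl i) 1 + Poly_Mapping.single (Inr i) 1) (L r i))"

definition prod_with_affine :: "('n \<Rightarrow> 'a) set \<Rightarrow> ('n + 'n \<Rightarrow> 'a) set" where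
  "prod_with_affine X = {z. (\<lambda>i. z (Inr i)) \<in> X}"

end

theory Submission
  imports Defs
begin

lemma pderiv_sum': "pderiv (sum f A) = (\<Sum>x\<in>A. pderiv (f x))"
  using higher_pderiv_sum[of 1 f A] by simp

lemma infinite_field:
  assumes "alg_closed TYPE('a::field)"
  shows "infinite (UNIV :: 'a set)"
proof
  assume fin: "finite (UNIV :: 'a set)"
  define q :: "'a poly" where "q = (\<Prod>a\<in>UNIV. [:-a,1:]) + 1"
  have dprod: "degree (\<Prod>a\<in>(UNIV::'a set). [:-a,1:]) = card (UNIV::'a set)"
    by (subst degree_prod_eq_sum_degree) auto
  have "card (UNIV::'a set) > 0" using fin by (simp add: card_gt_0_iff)
  hence "degree q > 0" unfolding q_def using dprod
    by (subst degree_add_eq_left) auto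
  then obtain x where "poly q x = 0" using assms unfolding alg_closed_def by blast
  moreover have "poly (\<Prod>a\<in>(UNIV::'a set). [:-a,1:]) x = 0"
    using fin by (simp add: poly_prod prod_zero_iff)
  ultimately show False unfolding q_def by simp
qed

definition mon :: "('v \<Rightarrow>\<^sub>0 nat) \<Rightarrow> ('v \<Rightarrow> 'a::comm_ring_1) \<Rightarrow> 'a" where
  "mon m p = (\<Prod>i\<in>Poly_Mapping.keys m. p i ^ Poly_Mapping.lookup m i)"

lemma mon_split1:
  "mon m q = q k ^ Poly_Mapping.lookup m k * (\<Prod>i\<in>Poly_Mapping.keys m - {k}. q i ^ Poly_Mapping.lookup m i)"
proof (cases "k \<in> Poly_Mapping.keys m")
  case True
  then show ?thesis unfolding mon_def by (simp add: prod.remove)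
next
  case False
  then show ?thesis unfolding mon_def by (simp add: in_keys_iff)
qed

lemma mon_split2:
  assumes "a \<noteq> b"
  shows "mon m q = q a ^ Poly_Mapping.lookup m a * q b ^ Poly_Mapping.lookup m b * (\<Prod>i\<in>Poly_Mapping.keys m - {a,b}. q i ^ Poly_Mapping.lookup m i)"
proof -
  have "(\<Prod>i\<in>Poly_Mapping.keys m - {a}. q i ^ Poly_Mapping.lookup m i) = q b ^ Poly_Mapping.lookup m b * (\<Prod>i\<in>Poly_Mapping.keys m - {a} - {b}. q i ^ Poly_Mapping.lookup m i)"
  proof (cases "b \<in> Poly_Mapping.keys m")
    case True
    then have "b \<in> Poly_Mapping.keys m - {a}" using assms by auto
    then show ?thesis by (simp add: prod.remove)
  next
    case False
    then show ?thesis by (simp add: in_keys_iff)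
  qed
  moreover have "Poly_Mapping.keys m - {a} - {b} = Poly_Mapping.keys m - {a,b}" by auto
  ultimately show ?thesis using mon_split1[of m q a] by (simp add: mult.assoc)
qed

abbreviation "Rk m p k \<equiv> (\<Prod>i\<in>Poly_Mapping.keys m - {k}. p i ^ Poly_Mapping.lookup m i)"

lemma diff_unit:
  "mpoly_diff f p (\<lambda>i. if i = k then 1 else 0) =
   (\<Sum>m\<in>Poly_Mapping.keys f. Poly_Mapping.lookup f m *
      (of_nat (Poly_Mapping.lookup m k) * p k ^ (Poly_Mapping.lookup m k - 1) * Rk m p k))"
  unfolding mpoly_diff_def
proof (rule sum.cong[OF refl])
  fix m
  show "Poly_Mapping.lookup f m *
        (\<Sum>i\<in>Poly_Mapping.keys m. of_nat (Poly_Mapping.lookup m i) * p i ^ (Poly_Mapping.lookup m i - 1) *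
            (\<Prod>j\<in>Poly_Mapping.keys m - {i}. p j ^ Poly_Mapping.lookup m j) * (if i = k then 1 else 0)) =
        Poly_Mapping.lookup f m *
      (of_nat (Poly_Mapping.lookup m k) * p k ^ (Poly_Mapping.lookup m k - 1) * Rk m p k)"
  proof (cases "k \<in> Poly_Mapping.keys m")
    case True
    then show ?thesis by (simp add: if_distrib cong: if_cong)
  next
    case False
    then show ?thesis by (simp add: in_keys_iff if_distrib cong: if_cong)
  qed
qed

lemma eval_upd:
  "mpoly_eval f (p(k := y)) =
   (\<Sum>m\<in>Poly_Mapping.keys f. Poly_Mapping.lookup f m * (y ^ Poly_Mapping.lookup m k * Rk m p k))"
  unfolding mpoly_eval_def
  apply (rule sum.cong[OF refl])
  apply (subst mon_split1[of _ _ k, unfolded mon_def])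
  apply simp
  done

lemma translation:
  assumes inf: "infinite (UNIV :: 'a::field set)"
    and van: "\<And>c. mpoly_eval f (p(k := p k + c)) = (0::'a)"
  shows "mpoly_diff f p (\<lambda>i. if i = k then 1 else 0) = 0"
proof -
  define P where "P = (\<Sum>m\<in>Poly_Mapping.keys f. smult (Poly_Mapping.lookup f m * Rk m p k)
                         ([:p k, 1:] ^ Poly_Mapping.lookup m k))"
  have "\<And>c. poly P c = 0"
  proof -
    fix c
    have "poly P c = mpoly_eval f (p(k := p k + c))"
      unfolding P_def eval_upd poly_sum by (simp add: mult_ac)
    then show "poly P c = 0" using van by simp
  qed
  hence "P = 0" using poly_roots_finite[of P] inf by auto
  hence "pderiv P = 0" by simp
  hence "poly (pderiv P) 0 = 0" by simp
  moreover have "poly (pderiv P) 0 = mpoly_diff f p (\<lambda>i. if i = k then 1 else 0)"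
    unfolding P_def diff_unit pderiv_sum' poly_sum
    by (simp add: pderiv_smult pderiv_power pderiv_pCons mult_ac)
  ultimately show ?thesis by simp
qed

lemma diff_add:
  "mpoly_diff f p (\<lambda>i. u i + w i) = mpoly_diff f p u + mpoly_diff f p w"
  unfolding mpoly_diff_def
  by (simp add: distrib_left distrib_right sum.distrib)

lemma diff_smult:
  "mpoly_diff f p (\<lambda>i. c * u i) = c * mpoly_diff f p u"
  unfolding mpoly_diff_def
  by (simp add: sum_distrib_left mult_ac)

lemma diff_scaled_unit:
  "mpoly_diff f p (\<lambda>i. p k * (if i = k then 1 else 0)) =
   (\<Sum>m\<in>Poly_Mapping.keys f. Poly_Mapping.lookup f m * (of_nat (Poly_Mapping.lookup m k) * mon m p))"
proof -
  have h: "\<And>m. of_nat (Poly_Mapping.lookup m k) * p k ^ (Poly_Mapping.lookup m k - 1) * Rk m p k * p k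
      = of_nat (Poly_Mapping.lookup m k) * mon m p"
  proof -
    fix m
    show "?thesis m"
    proof (cases "Poly_Mapping.lookup m k")
      case 0 then show ?thesis by simp
    next
      case (Suc n)
      then show ?thesis by (simp add: mon_split1[of m p k] mult_ac)
    qed
  qed
  then show ?thesis
    unfolding diff_smult diff_unit sum_distrib_left
    apply (intro sum.cong refl)
    subgoal for m
    proof -
      have "p k * (Poly_Mapping.lookup f m * (of_nat (Poly_Mapping.lookup m k) * p k ^ (Poly_Mapping.lookup m k - 1) * Rk m p k))
        = Poly_Mapping.lookup f m * (of_nat (Poly_Mapping.lookup m k) * p k ^ (Poly_Mapping.lookup m k - 1) * Rk m p k * p k)"
        by (simp only: ac_simps)
      then show ?thesis unfolding h .
    qed
    done
qed

lemma mon_scale: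
  fixes c :: "'a::field"
  assumes "a \<noteq> b" "c \<noteq> 0" "Poly_Mapping.lookup m a \<le> D"
  shows "c ^ D * mon m (p(a := p a / c, b := p b * c)) =
         c ^ (Poly_Mapping.lookup m b + D - Poly_Mapping.lookup m a) * mon m p"
proof -
  let ?ma = "Poly_Mapping.lookup m a" and ?mb = "Poly_Mapping.lookup m b"
  let ?R = "\<Prod>i\<in>Poly_Mapping.keys m - {a,b}. p i ^ Poly_Mapping.lookup m i"
  have R: "(\<Prod>i\<in>Poly_Mapping.keys m - {a,b}. (p(a := p a / c, b := p b * c)) i ^ Poly_Mapping.lookup m i) = ?R"
    by (rule prod.cong) auto
  have cD: "c ^ D = c ^ ?ma * c ^ (D - ?ma)" using assms(3) by (simp flip: power_add)
  have e: "c ^ (?mb + D - ?ma) = c ^ ?mb * c ^ (D - ?ma)" using assms(3) by (simp flip: power_add)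
  show ?thesis
  proof -
    have ca: "c ^ ?ma * (p a / c) ^ ?ma = p a ^ ?ma"
    proof -
      have "c * (p a / c) = p a" using assms(2) by simp
      then show ?thesis by (simp only: power_mult_distrib[symmetric])
    qed
    have "c ^ D * mon m (p(a := p a / c, b := p b * c)) =
       c ^ (D - ?ma) * c ^ ?mb * p b ^ ?mb * ?R * (c ^ ?ma * (p a / c) ^ ?ma)"
    proof -
      have ua: "(p(a := p a / c, b := p b * c)) a = p a / c" using assms(1) by simp
      have ub: "(p(a := p a / c, b := p b * c)) b = p b * c" by simp
      show ?thesis
        unfolding mon_split2[OF assms(1), of m "p(a := p a / c, b := p b * c)"] R cD ua ub power_mult_distrib
        by (simp only: ac_simps)
    qed
    also have "\<dots> = c ^ (?mb + D - ?ma) * mon m p"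
      unfolding ca e mon_split2[OF assms(1), of m p] by (simp only: ac_simps)
    finally show ?thesis .
  qed
qed

lemma scaling:
  fixes p :: "'v \<Rightarrow> 'a::field"
  assumes inf: "infinite (UNIV :: 'a set)" and ab: "a \<noteq> b"
    and p0: "mpoly_eval f p = 0"
    and van: "\<And>c. c \<noteq> 0 \<Longrightarrow> mpoly_eval f (p(a := p a / c, b := p b * c)) = 0"
  shows "mpoly_diff f p (\<lambda>i. if i = a then - p a else if i = b then p b else 0) = 0"
proof -
  let ?fm = "\<lambda>m. Poly_Mapping.lookup f m"
  let ?ma = "\<lambda>m. Poly_Mapping.lookup m a" and ?mb = "\<lambda>m. Poly_Mapping.lookup m b"
  define D where "D = (\<Sum>m\<in>Poly_Mapping.keys f. ?ma m)"
  have Dge: "\<And>m. m \<in> Poly_Mapping.keys f \<Longrightarrow> ?ma m \<le> D"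
    unfolding D_def by (rule member_le_sum) auto
  define P where "P = (\<Sum>m\<in>Poly_Mapping.keys f. smult (?fm m * mon m p) (monom 1 (?mb m + D - ?ma m)))"
  have "\<And>c. c \<noteq> 0 \<Longrightarrow> poly P c = 0"
  proof -
    fix c :: 'a assume c: "c \<noteq> 0"
    have "poly P c = (\<Sum>m\<in>Poly_Mapping.keys f. ?fm m * (c ^ D * mon m (p(a := p a / c, b := p b * c))))"
      unfolding P_def poly_sum poly_smult poly_monom
      by (intro sum.cong refl) (simp add: mon_scale[OF ab c Dge])
    also have "\<dots> = c ^ D * mpoly_eval f (p(a := p a / c, b := p b * c))"
      unfolding mpoly_eval_def mon_def sum_distrib_left by (intro sum.cong refl) (simp add: ac_simps)
    finally show "poly P c = 0" using van[OF c] by simp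
  qed
  hence "{c. c \<noteq> 0} \<subseteq> {c. poly P c = 0}" by auto
  moreover have "infinite {c::'a. c \<noteq> 0}"
  proof
    assume "finite {c::'a. c \<noteq> 0}"
    hence "finite (insert 0 {c::'a. c \<noteq> 0})" by simp
    moreover have "insert 0 {c::'a. c \<noteq> 0} = UNIV" by auto
    ultimately show False using inf by simp
  qed
  ultimately have "P = 0" using poly_roots_finite[of P] finite_subset by blast
  hence "poly (pderiv P) 1 = 0" by simp
  moreover have "poly (pderiv P) 1 =
     (\<Sum>m\<in>Poly_Mapping.keys f. ?fm m * mon m p * (of_nat (?mb m) - of_nat (?ma m))) + of_nat D * mpoly_eval f p"
  proof -
    have "poly (pderiv P) 1 = (\<Sum>m\<in>Poly_Mapping.keys f. ?fm m * mon m p * of_nat (?mb m + D - ?ma m))"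
      unfolding P_def pderiv_sum' poly_sum by (simp add: pderiv_smult pderiv_monom poly_monom)
    also have "\<dots> = (\<Sum>m\<in>Poly_Mapping.keys f. ?fm m * mon m p * (of_nat (?mb m) - of_nat (?ma m)) + of_nat D * (?fm m * mon m p))"
    proof (intro sum.cong refl)
      fix m assume "m \<in> Poly_Mapping.keys f"
      hence le: "?ma m \<le> ?mb m + D" using Dge by fastforce
      have "(of_nat (?mb m + D - ?ma m) :: 'a) = of_nat (?mb m + D) - of_nat (?ma m)"
        using le by (rule of_nat_diff)
      hence eqn: "(of_nat (?mb m + D - ?ma m) :: 'a) = of_nat (?mb m) + of_nat D - of_nat (?ma m)"
        by simp
      then show "?fm m * mon m p * of_nat (?mb m + D - ?ma m) = ?fm m * mon m p * (of_nat (?mb m) - of_nat (?ma m)) + of_nat D * (?fm m * mon m p)"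
        by (simp only: eqn) (simp only: algebra_simps)
    qed
    also have "\<dots> = (\<Sum>m\<in>Poly_Mapping.keys f. ?fm m * mon m p * (of_nat (?mb m) - of_nat (?ma m))) + of_nat D * mpoly_eval f p"
      unfolding sum.distrib mpoly_eval_def mon_def sum_distrib_left ..
    finally show ?thesis .
  qed
  moreover have "mpoly_diff f p (\<lambda>i. if i = a then - p a else if i = b then p b else 0) =
     (\<Sum>m\<in>Poly_Mapping.keys f. ?fm m * mon m p * (of_nat (?mb m) - of_nat (?ma m)))"
  proof -
    have vdef: "(\<lambda>i. if i = a then - p a else if i = b then p b else 0) =
          (\<lambda>i. (- 1) * (p a * (if i = a then 1 else 0)) + p b * (if i = b then 1 else 0))"
      using ab by auto
    show ?thesis
      unfolding vdef diff_add diff_smult diff_scaled_unit[unfolded diff_smult]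
      by (simp add: sum_distrib_left sum_subtractf[symmetric] algebra_simps flip: sum.distrib)
  qed
  ultimately show ?thesis using p0 by simp
qed

lemma eval_superset:
  assumes "finite S" "Poly_Mapping.keys f \<subseteq> S"
  shows "mpoly_eval f p = (\<Sum>m\<in>S. Poly_Mapping.lookup f m * mon m p)"
  unfolding mpoly_eval_def mon_def
  by (rule sum.mono_neutral_left) (use assms in \<open>auto simp: in_keys_iff\<close>)

lemma eval_add: "mpoly_eval (f + g) p = mpoly_eval f p + mpoly_eval g p"
proof -
  let ?S = "Poly_Mapping.keys f \<union> Poly_Mapping.keys g"
  have fin: "finite ?S" by simp
  have "mpoly_eval (f + g) p = (\<Sum>m\<in>?S. Poly_Mapping.lookup (f + g) m * mon m p)"
    by (rule eval_superset[OF fin keys_add])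
  also have "\<dots> = (\<Sum>m\<in>?S. Poly_Mapping.lookup f m * mon m p) + (\<Sum>m\<in>?S. Poly_Mapping.lookup g m * mon m p)"
    by (simp add: lookup_add distrib_right sum.distrib)
  also have "\<dots> = mpoly_eval f p + mpoly_eval g p"
    using eval_superset[OF fin, of f p] eval_superset[OF fin, of g p] by simp
  finally show ?thesis .
qed

lemma eval_zero: "mpoly_eval 0 p = 0"
  unfolding mpoly_eval_def by simp

lemma eval_sum: "mpoly_eval (\<Sum>i\<in>A. g i) p = (\<Sum>i\<in>A. mpoly_eval (g i) p)"
  by (induction A rule: infinite_finite_induct) (simp_all add: eval_zero eval_add)

lemma eval_single: "mpoly_eval (Poly_Mapping.single m c) p = c * mon m p"
  by (subst eval_superset[of "{m}"]) auto

lemma mon_bilin: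
  "mon (Poly_Mapping.single (Inl i) (1::nat) + Poly_Mapping.single (Inr i) 1) z = z (Inl i) * z (Inr i)"
proof -
  let ?m = "Poly_Mapping.single (Inl i) (1::nat) + Poly_Mapping.single (Inr i) 1"
  have k: "Poly_Mapping.keys ?m - {Inl i, Inr i} = {}"
    using keys_add[of "Poly_Mapping.single (Inl i) (1::nat)" "Poly_Mapping.single (Inr i) 1"] by auto
  show ?thesis
    unfolding mon_split2[of "Inl i" "Inr i", OF Inl_not_Inr] k
    by (simp add: lookup_add lookup_single_not_eq)
qed

lemma eval_bilin:
  "mpoly_eval (bilin_form L r) z = (\<Sum>i\<in>UNIV. L r i * z (Inl i) * z (Inr i))"
  unfolding bilin_form_def eval_sum eval_single mon_bilin by (simp add: mult.assoc)

lemma diff_zero_vec: "mpoly_diff f p (\<lambda>i. 0) = 0"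
  unfolding mpoly_diff_def by simp

lemma diff_sum_vec:
  assumes "finite J" "\<And>j. j \<in> J \<Longrightarrow> mpoly_diff f p (u j) = 0"
  shows "mpoly_diff f p (\<lambda>i. \<Sum>j\<in>J. s j * u j i) = 0"
  using assms
proof (induction J rule: finite_induct)
  case empty
  then show ?case by (simp add: diff_zero_vec)
next
  case (insert x F)
  have "mpoly_diff f p (\<lambda>i. \<Sum>j\<in>insert x F. s j * u j i) =
        mpoly_diff f p (\<lambda>i. s x * u x i + (\<Sum>j\<in>F. s j * u j i))"
    using insert.hyps by simp
  also have "\<dots> = s x * mpoly_diff f p (u x) + mpoly_diff f p (\<lambda>i. \<Sum>j\<in>F. s j * u j i)"
    by (simp add: diff_add diff_smult)
  also have "\<dots> = 0" using insert by simp
  finally show ?case .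
qed

theorem lemma1p1:
  fixes X :: "('n::finite \<Rightarrow> 'a::field) set"
    and L :: "nat \<Rightarrow> 'n \<Rightarrow> 'a" and l :: nat
    and p :: "'n + 'n \<Rightarrow> 'a"
  assumes "alg_closed TYPE('a)"
    and "zariski_closed X"
    and "p \<in> zero_set (bilin_form L ` {..<l})"
    and "smooth_point (prod_with_affine X) p"
    and "\<forall>i. p (Inr i) \<noteq> 0"
  shows "transverse_at (zero_set (bilin_form L ` {..<l})) (prod_with_affine X) p"
proof -
  let ?V = "zero_set (bilin_form L ` {..<l})" and ?W = "prod_with_affine X"
  have inf: "infinite (UNIV :: 'a set)" by (rule infinite_field[OF assms(1)])
  have pV: "p \<in> ?V" by fact
  have pW: "p \<in> ?W" using assms(4) unfolding smooth_point_def by simp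
  define vj where "vj j = (\<lambda>i. if i = Inl j then - p (Inl j) else if i = Inr j then p (Inr j) else 0)" for j
  define ej where "ej j = (\<lambda>i::'n+'n. if i = Inl j then (1::'a) else 0)" for j
  have TV: "mpoly_diff f p (vj j) = 0" if f: "f \<in> vanishing_ideal ?V" for f j
  proof -
    have "mpoly_diff f p (\<lambda>i. if i = Inl j then - p (Inl j) else if i = Inr j then p (Inr j) else 0) = 0"
    proof (rule scaling[OF inf Inl_not_Inr])
      show "mpoly_eval f p = 0" using f pV unfolding vanishing_ideal_def by blast
      fix c :: 'a assume c: "c \<noteq> 0"
      have "p(Inl j := p (Inl j) / c, Inr j := p (Inr j) * c) \<in> ?V"
        unfolding zero_set_def
      proof (intro CollectI ballI)
        fix g assume "g \<in> bilin_form L ` {..<l}"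
        then obtain r where r: "r < l" "g = bilin_form L r" by auto
        have "mpoly_eval g (p(Inl j := p (Inl j) / c, Inr j := p (Inr j) * c)) = mpoly_eval g p"
          unfolding r(2) eval_bilin
          by (intro sum.cong refl) (use c in auto)
        also have "\<dots> = 0" using pV r unfolding zero_set_def by auto
        finally show "mpoly_eval g (p(Inl j := p (Inl j) / c, Inr j := p (Inr j) * c)) = 0" .
      qed
      then show "mpoly_eval f (p(Inl j := p (Inl j) / c, Inr j := p (Inr j) * c)) = 0"
        using f unfolding vanishing_ideal_def by blast
    qed
    then show ?thesis unfolding vj_def .
  qed
  have TW: "mpoly_diff f p (ej j) = 0" if f: "f \<in> vanishing_ideal ?W" for f j
    unfolding ej_def
  proof (rule translation[OF inf])
    fix c :: 'a
    have "p(Inl j := p (Inl j) + c) \<in> ?W" using pW unfolding prod_with_affine_def by simp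
    then show "mpoly_eval f (p(Inl j := p (Inl j) + c)) = 0"
      using f unfolding vanishing_ideal_def by blast
  qed
  show ?thesis
    unfolding transverse_at_def
  proof (intro conjI allI pV pW)
    fix w :: "'n + 'n \<Rightarrow> 'a"
    define s where "s j = w (Inr j) / p (Inr j)" for j
    define t where "t j = w (Inl j) + s j * p (Inl j)" for j
    define a where "a = (\<lambda>i. \<Sum>j\<in>UNIV. s j * vj j i)"
    define b where "b = (\<lambda>i. \<Sum>j\<in>UNIV. t j * ej j i)"
    have aT: "a \<in> tangent_space ?V p"
      unfolding tangent_space_def a_def using TV by (auto intro: diff_sum_vec)
    have bT: "b \<in> tangent_space ?W p"
      unfolding tangent_space_def b_def using TW by (auto intro: diff_sum_vec)
    have "w = (\<lambda>i. a i + b i)"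
    proof
      fix i show "w i = a i + b i"
      proof (cases i)
        case (Inl k)
        then show ?thesis unfolding a_def b_def vj_def ej_def t_def
          by (simp add: if_distrib cong: if_cong)
      next
        case (Inr k)
        then show ?thesis unfolding a_def b_def vj_def ej_def s_def
          using assms(5) by (simp add: if_distrib cong: if_cong)
      qed
    qed
    then show "\<exists>a\<in>tangent_space ?V p. \<exists>b\<in>tangent_space ?W p. w = (\<lambda>i. a i + b i)"
      using aT bT by blast
  qed
qed

end
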